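(* Let $z\ge 1$, $r\ge 1$ and $g\ge 3$ be integers. Then there exists a $[z,r;g]$-mixed graph.
   Context: A mixed graph is a finite graph that may contain both (undirected) edges and (directed) arcs. A $[z,r;g]$-mixed graph is a mixed graph in which every vertex is the tail of exactly $z$ arcs, the head of exactly $z$ arcs, and is incident with exactly $r$ edges, and whose girth is $g$. Walks are sequences $(v_0,\dots,v_n)$ where for each $i$, $v_iv_{i+1}$ is an edge or $(v_i,v_{i+1})$ is an arc (arcs may only be traversed in their direction, edges in either direction); a cycle is a closed such walk with no repeated vertex other than $v_0=v_n$ and no edge or arc used twice; the girth is the length of a shortest cycle. *)

theory Defs
  imports Main
begin

definition mixed_graph :: "'a set \<Rightarrow> 'a set set \<Rightarrow> ('a \<times> 'a) set \<Rightarrow> bool" where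
  "mixed_graph V E A \<longleftrightarrow> finite V
     \<and> (\<forall>e\<in>E. \<exists>u v. e = {u, v} \<and> u \<noteq> v \<and> u \<in> V \<and> v \<in> V)
     \<and> (\<forall>(u, v)\<in>A. u \<noteq> v \<and> u \<in> V \<and> v \<in> V)"

datatype 'a link = Edg "'a set" | Arc "'a \<times> 'a"

definition link_step :: "'a set set \<Rightarrow> ('a \<times> 'a) set \<Rightarrow> 'a link \<Rightarrow> 'a \<Rightarrow> 'a \<Rightarrow> bool" where
  "link_step E A l u v \<longleftrightarrow> (l = Edg {u, v} \<and> {u, v} \<in> E) \<or> (l = Arc (u, v) \<and> (u, v) \<in> A)"

definition is_cycle :: "'a set set \<Rightarrow> ('a \<times> 'a) set \<Rightarrow> 'a list \<Rightarrow> 'a link list \<Rightarrow> bool" where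
  "is_cycle E A vs ls \<longleftrightarrow> length ls \<ge> 1 \<and> length vs = length ls + 1
     \<and> hd vs = last vs \<and> distinct (butlast vs) \<and> distinct ls
     \<and> (\<forall>i < length ls. link_step E A (ls ! i) (vs ! i) (vs ! Suc i))"

definition has_girth :: "'a set set \<Rightarrow> ('a \<times> 'a) set \<Rightarrow> nat \<Rightarrow> bool" where
  "has_girth E A g \<longleftrightarrow> (\<exists>vs ls. is_cycle E A vs ls \<and> length ls = g)
     \<and> (\<forall>vs ls. is_cycle E A vs ls \<longrightarrow> g \<le> length ls)"

definition zrg_mixed_graph :: "nat \<Rightarrow> nat \<Rightarrow> nat \<Rightarrow> 'a set \<Rightarrow> 'a set set \<Rightarrow> ('a \<times> 'a) set \<Rightarrow> bool" where
  "zrg_mixed_graph z r g V E A \<longleftrightarrow> mixed_graph V E A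
     \<and> (\<forall>v\<in>V. card {w. (v, w) \<in> A} = z \<and> card {w. (w, v) \<in> A} = z
              \<and> card {e\<in>E. v \<in> e} = r)
     \<and> has_girth E A g"

end

theory Submission
  imports Defs "HOL-Library.Nat_Bijection"
begin


definition ugraph :: "'a set \<Rightarrow> 'a set set \<Rightarrow> bool" where
  "ugraph V E \<longleftrightarrow> finite V \<and> (\<forall>e\<in>E. \<exists>u v. e = {u,v} \<and> u \<noteq> v \<and> u \<in> V \<and> v \<in> V)"
definition uregular :: "'a set \<Rightarrow> 'a set set \<Rightarrow> nat \<Rightarrow> bool" where
  "uregular V E r \<longleftrightarrow> (\<forall>v\<in>V. card {e\<in>E. v\<in>e} = r)"
definition ucyc :: "'a set set \<Rightarrow> (nat \<Rightarrow> 'a) \<Rightarrow> nat \<Rightarrow> bool" where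
  "ucyc E w n \<longleftrightarrow> 3 \<le> n \<and> w n = w 0 \<and> inj_on w {..<n} \<and> (\<forall>i<n. {w i, w (Suc i)} \<in> E)"
definition girth_ge :: "'a set set \<Rightarrow> nat \<Rightarrow> bool" where
  "girth_ge E k \<longleftrightarrow> (\<forall>w n. ucyc E w n \<longrightarrow> k \<le> n)"

definition flip :: "'a \<Rightarrow> 'a set \<Rightarrow> 'a set" where
  "flip e S = (if e \<in> S then S - {e} else insert e S)"

lemma flip_flip[simp]: "flip e (flip e S) = S"
  unfolding flip_def by auto
lemma mem_flip: "x \<in> flip e S \<longleftrightarrow> (x \<in> S \<longleftrightarrow> x \<noteq> e)"
  unfolding flip_def by auto

definition cover_E :: "'a set set \<Rightarrow> ('a \<times> 'a set set) set set" where
  "cover_E E = {{(u,S),(w, flip {u,w} S)} | u w S. {u,w} \<in> E \<and> S \<subseteq> E}"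

lemma ugraph_finE: "ugraph V E \<Longrightarrow> finite E"
  unfolding ugraph_def
  by (rule finite_subset[of _ "Pow V"]) auto

lemma cover_ugraph: assumes "ugraph V E" shows "ugraph (V \<times> Pow E) (cover_E E)"
proof -
  have fE: "finite E" using ugraph_finE[OF assms] .
  { fix e assume "e \<in> cover_E E"
    then obtain u w S where e: "e = {(u,S),(w, flip {u,w} S)}" "{u,w} \<in> E" "S \<subseteq> E"
      unfolding cover_E_def by blast
    obtain a b where ab: "{u,w} = {a,b}" "a \<noteq> b" "a \<in> V" "b \<in> V" using assms e(2) unfolding ugraph_def by blast
    have "u \<noteq> w" "u \<in> V" "w \<in> V" using ab by (auto simp: doubleton_eq_iff)
    moreover have "flip {u,w} S \<subseteq> E" using e by (auto simp: flip_def)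
    ultimately have "\<exists>x y. e = {x,y} \<and> x \<noteq> y \<and> x \<in> V \<times> Pow E \<and> y \<in> V \<times> Pow E"
      using e by auto }
  then show ?thesis using assms fE unfolding ugraph_def by auto
qed

lemma nbr_card:
  assumes "ugraph V E" "v \<in> V"
  shows "card {e\<in>E. v\<in>e} = card {w. {v,w} \<in> E}"
proof -
  have "bij_betw (\<lambda>w. {v,w}) {w. {v,w} \<in> E} {e\<in>E. v\<in>e}"
  proof (rule bij_betwI')
    fix x y assume "x \<in> {w. {v,w} \<in> E}" "y \<in> {w. {v,w} \<in> E}"
    then show "({v, x} = {v, y}) = (x = y)" by (auto simp: doubleton_eq_iff)
  next
    fix x assume "x \<in> {w. {v,w} \<in> E}" then show "{v,x} \<in> {e\<in>E. v\<in>e}" by auto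
  next
    fix e assume "e \<in> {e\<in>E. v\<in>e}"
    then obtain a b where "e = {a,b}" "e \<in> E" "v \<in> e" using assms unfolding ugraph_def by blast
    then show "\<exists>x\<in>{w. {v,w} \<in> E}. e = {v,x}" by (auto simp: insert_commute)
  qed
  then show ?thesis by (simp add: bij_betw_same_card)
qed

lemma cover_regular:
  assumes "ugraph V E" "uregular V E r"
  shows "uregular (V \<times> Pow E) (cover_E E) r"
  unfolding uregular_def
proof
  fix p assume p: "p \<in> V \<times> Pow E"
  obtain v S where vS: "p = (v,S)" "v \<in> V" "S \<subseteq> E" using p by auto
  have eq: "{e\<in>cover_E E. p \<in> e} = (\<lambda>w. {(v,S),(w, flip {v,w} S)}) ` {w. {v,w} \<in> E}"
  proof (rule set_eqI, rule iffI)
    fix e assume "e \<in> {e\<in>cover_E E. p \<in> e}"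
    then obtain u w T where e: "e = {(u,T),(w, flip {u,w} T)}" "{u,w} \<in> E" "T \<subseteq> E" "(v,S) \<in> e"
      unfolding cover_E_def vS by blast
    show "e \<in> (\<lambda>w. {(v,S),(w, flip {v,w} S)}) ` {w. {v,w} \<in> E}"
    proof (cases "(v,S) = (u,T)")
      case True then show ?thesis using e by auto
    next
      case False
      then have "v = w" "S = flip {u,w} T" using e by auto
      then have "T = flip {v,u} S" by (simp add: insert_commute)
      then have "e = {(v,S),(u, flip {v,u} S)}" using e \<open>v = w\<close> \<open>S = _\<close> by auto
      moreover have "{v,u} \<in> E" using e \<open>v = w\<close> by (simp add: insert_commute)
      ultimately show ?thesis by auto
    qed
  next
    fix e assume "e \<in> (\<lambda>w. {(v,S),(w, flip {v,w} S)}) ` {w. {v,w} \<in> E}"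
    then obtain w where "e = {(v,S),(w, flip {v,w} S)}" "{v,w} \<in> E" by auto
    then show "e \<in> {e\<in>cover_E E. p \<in> e}" unfolding cover_E_def using vS by blast
  qed
  have inj: "inj_on (\<lambda>w. {(v,S),(w, flip {v,w} S)}) {w. {v,w} \<in> E}"
  proof (rule inj_onI)
    fix x y assume x: "x \<in> {w. {v,w} \<in> E}" and y: "y \<in> {w. {v,w} \<in> E}"
      and h: "{(v,S),(x, flip {v,x} S)} = {(v,S),(y, flip {v,y} S)}"
    have "x \<noteq> v" using x assms(1) unfolding ugraph_def by (force simp: doubleton_eq_iff)
    then show "x = y" using h by (auto simp: doubleton_eq_iff)
  qed
  show "card {e\<in>cover_E E. p \<in> e} = r"
    unfolding eq card_image[OF inj]
    using nbr_card[OF assms(1) vS(2)] assms(2) vS(2) unfolding uregular_def by auto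
qed



lemma card_less_Suc_filter:
  "card {s. s < Suc k \<and> P s} = card {s. s < k \<and> P s} + (if P k then 1 else 0)"
proof -
  have "{s. s < Suc k \<and> P s} = {s. s < k \<and> P s} \<union> (if P k then {k} else {})"
    by (auto simp: less_Suc_eq)
  then show ?thesis by (simp add: card_insert_if)
qed

lemma cover_girth:
  assumes ug: "ugraph V E" and gg: "girth_ge E k"
  shows "girth_ge (cover_E E) (Suc k)"
  unfolding girth_ge_def
proof (intro allI impI)
  fix c L assume cyc: "ucyc (cover_E E) c L"
  define w where "w t = fst (c t)" for t
  define S where "S t = snd (c t)" for t
  define ed where "ed t = {w t, w (Suc t)}" for t
  have L3: "3 \<le> L" and cL: "c L = c 0" and injc: "inj_on c {..<L}"
    and edc: "\<And>t. t < L \<Longrightarrow> {c t, c (Suc t)} \<in> cover_E E"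
    using cyc unfolding ucyc_def by auto
  have step: "ed t \<in> E \<and> S (Suc t) = flip (ed t) (S t)" if tL: "t < L" for t
  proof -
    obtain u x T where h: "{c t, c (Suc t)} = {(u,T),(x, flip {u,x} T)}" "{u,x} \<in> E"
      using edc[OF tL] unfolding cover_E_def by blast
    show ?thesis
    proof (cases "c t = (u,T)")
      case True
      then have "c (Suc t) = (x, flip {u,x} T)" using h(1) by (auto simp: doubleton_eq_iff)
      then show ?thesis using True h(2) unfolding ed_def w_def S_def by auto
    next
      case False
      then have "c t = (x, flip {u,x} T)" "c (Suc t) = (u,T)" using h(1) by (auto simp: doubleton_eq_iff)
      then show ?thesis using h(2) unfolding ed_def w_def S_def by (auto simp: insert_commute)
    qed
  qed
  have adj: "w t \<noteq> w (Suc t)" if "t < L" for t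
  proof
    assume "w t = w (Suc t)"
    then have "ed t = {w t}" unfolding ed_def by auto
    then show False using step[OF that] ug unfolding ugraph_def by (force simp: doubleton_eq_iff)
  qed
  define cnt where "cnt e m = card {s. s < m \<and> ed s = e}" for e m
  have par: "\<forall>e. (e \<in> S m) = ((e \<in> S 0) = even (cnt e m))" if "m \<le> L" for m
    using that
  proof (induction m)
    case 0 then show ?case unfolding cnt_def by simp
  next
    case (Suc m)
    then have "m < L" by simp
    show ?case
    proof
      fix e
      have "cnt e (Suc m) = cnt e m + (if ed m = e then 1 else 0)"
        unfolding cnt_def by (rule card_less_Suc_filter)
      then show "(e \<in> S (Suc m)) = ((e \<in> S 0) = even (cnt e (Suc m)))"
        using Suc.IH \<open>m < L\<close> step[OF \<open>m < L\<close>] by (auto simp: mem_flip)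
    qed
  qed
  have evenL: "even (cnt e L)" for e
    using par[of L] cL unfolding S_def by auto
  have nobt: "w (t+2) \<noteq> w t" if "t + 2 \<le> L" for t
  proof
    assume h: "w (t+2) = w t"
    have "ed (Suc t) = ed t" unfolding ed_def using h by (auto simp: numeral_2_eq_2)
    then have "S (t+2) = S t" using step[of t] step[of "Suc t"] that by (simp add: numeral_2_eq_2)
    then have cc: "c (t+2) = c t" using h unfolding w_def S_def by (simp add: prod_eq_iff)
    show False
    proof (cases "t + 2 < L")
      case True
      then show False using injc cc by (auto dest: inj_onD)
    next
      case False
      then have "t + 2 = L" using that by simp
      then have "c t = c 0" using cc cL by simp
      then have "t = 0" using injc \<open>t + 2 = L\<close> by (auto dest: inj_onD)
      then show False using \<open>t + 2 = L\<close> L3 by simp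
    qed
  qed
  define P where "P j \<longleftrightarrow> j \<le> L \<and> (\<exists>i<j. w i = w j)" for j
  have PL: "P L" unfolding P_def w_def using cL L3 by (intro conjI exI[of _ 0]) auto
  define j where "j = (LEAST j. P j)"
  have Pj: "P j" unfolding j_def using PL by (rule LeastI)
  have jmin: "\<And>j'. P j' \<Longrightarrow> j \<le> j'" unfolding j_def by (rule Least_le)
  obtain i where ij: "i < j" "w i = w j" "j \<le> L" using Pj unfolding P_def by auto
  have injw: "w a \<noteq> w b" if "a < b" "b < j" for a b
  proof
    assume "w a = w b"
    then have "P b" unfolding P_def using that ij by auto
    then show False using jmin that by fastforce
  qed
  define d where "d = j - i"
  have d1: "d \<noteq> 1"
  proof
    assume "d = 1" then have "j = Suc i" unfolding d_def using ij by simp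
    then show False using adj[of i] ij by simp
  qed
  have d2: "d \<noteq> 2"
  proof
    assume "d = 2" then have "j = i + 2" unfolding d_def using ij by simp
    then show False using nobt[of i] ij by simp
  qed
  have d3: "3 \<le> d" using d1 d2 ij unfolding d_def by simp
  have seg: "ucyc E (\<lambda>t. w (i + t)) d"
    unfolding ucyc_def
  proof (intro conjI allI impI)
    show "3 \<le> d" by (rule d3)
    show "w (i + d) = w (i + 0)" using ij unfolding d_def by simp
    show "inj_on (\<lambda>t. w (i + t)) {..<d}"
    proof (rule inj_onI)
      fix a b assume ab: "a \<in> {..<d}" "b \<in> {..<d}" "w (i + a) = w (i + b)"
      then have "i + a < j" "i + b < j" unfolding d_def by auto
      then show "a = b" using ab(3) injw[of "i+a" "i+b"] injw[of "i+b" "i+a"]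
        by (cases a b rule: linorder_cases) auto
    qed
    fix t assume "t < d"
    then show "{w (i + t), w (i + Suc t)} \<in> E" using step[of "i+t"] ij unfolding ed_def d_def by simp
  qed
  then have kd: "k \<le> d" using gg unfolding girth_ge_def by blast
  have inj_ed: "inj_on ed {i..<j}"
  proof -
    have "s = t" if st: "s \<in> {i..<j}" "t \<in> {i..<j}" "ed s = ed t" "s < t" for s t
    proof -
      have "w s = w t \<or> (w s = w (Suc t) \<and> w (Suc s) = w t)"
        using st(3) unfolding ed_def by (auto simp: doubleton_eq_iff)
      then show ?thesis
      proof
        assume "w s = w t" then show ?thesis using injw[of s t] st by simp
      next
        assume h: "w s = w (Suc t) \<and> w (Suc s) = w t"
        show ?thesis
        proof (cases "Suc s = t")
          case True
          then show ?thesis using nobt[of s] h st ij by simp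
        next
          case False
          then show ?thesis using injw[of "Suc s" t] h st by simp
        qed
      qed
    qed
    then show ?thesis unfolding inj_on_def by (metis linorder_neqE_nat)
  qed
  define F where "F = ed ` {i..<j}"
  have cardF: "card F = d" unfolding F_def d_def using card_image[OF inj_ed] by simp
  have finF: "finite F" unfolding F_def by simp
  have cnt2: "2 \<le> cnt e L" if eF: "e \<in> F" for e
  proof -
    obtain t where t: "t \<in> {i..<j}" "e = ed t" using eF unfolding F_def by auto
    have "t \<in> {s. s < L \<and> ed s = e}" using t ij by auto
    then have "cnt e L \<noteq> 0" unfolding cnt_def by (auto simp: card_eq_0_iff)
    then show ?thesis using evenL[of e] by presburger
  qed
  have "(\<Sum>e\<in>F. cnt e L) = card (\<Union>e\<in>F. {s. s < L \<and> ed s = e})"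
    unfolding cnt_def by (rule card_UN_disjoint[symmetric]) (use finF in auto)
  also have "\<dots> \<le> card {..<L}" by (rule card_mono) auto
  finally have "(\<Sum>e\<in>F. cnt e L) \<le> L" by simp
  moreover have "(\<Sum>e\<in>F. 2) \<le> (\<Sum>e\<in>F. cnt e L)" by (rule sum_mono) (use cnt2 in auto)
  ultimately have "2 * d \<le> L" using cardF by simp
  then show "Suc k \<le> L" using kd d3 by simp
qed



lemma transfer_nat:
  fixes V :: "'b set"
  assumes ug: "ugraph V E" and ur: "uregular V E r" and gg: "girth_ge E k" and ne: "V \<noteq> {}"
  shows "\<exists>(V' :: nat set) E'. ugraph V' E' \<and> uregular V' E' r \<and> girth_ge E' k \<and> V' \<noteq> {}"
proof -
  have finV: "finite V" using ug unfolding ugraph_def by simp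
  obtain f :: "'b \<Rightarrow> nat" and m where f: "f ` V = {i. i < m}" "inj_on f V"
    using finite_imp_inj_to_nat_seg[OF finV] by blast
  define E' where "E' = (\<lambda>e. f ` e) ` E"
  have Epow: "E \<subseteq> Pow V" using ug unfolding ugraph_def by auto
  have injP: "inj_on (image f) (Pow V)" by (rule inj_on_image_Pow[OF f(2)])
  have "ugraph (f ` V) E'"
    unfolding ugraph_def
  proof (intro conjI ballI)
    show "finite (f ` V)" using ug unfolding ugraph_def by simp
    fix e' assume "e' \<in> E'"
    then obtain e where "e \<in> E" "e' = f ` e" unfolding E'_def by auto
    then obtain u v where "e = {u,v}" "u \<noteq> v" "u \<in> V" "v \<in> V" using ug unfolding ugraph_def by blast
    then show "\<exists>u v. e' = {u, v} \<and> u \<noteq> v \<and> u \<in> f ` V \<and> v \<in> f ` V"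
      using \<open>e' = f ` e\<close> f(2) by (intro exI[of _ "f u"] exI[of _ "f v"]) (auto dest: inj_onD)
  qed
  moreover have "uregular (f ` V) E' r"
    unfolding uregular_def
  proof
    fix x assume "x \<in> f ` V"
    then obtain v where v: "v \<in> V" "x = f v" by auto
    have eq: "{e'\<in>E'. x \<in> e'} = image f ` {e\<in>E. v\<in>e}"
    proof (rule set_eqI, rule iffI)
      fix e' assume "e' \<in> {e'\<in>E'. x \<in> e'}"
      then obtain e where "e \<in> E" "e' = f ` e" "f v \<in> f ` e" unfolding E'_def v by auto
      moreover have "e \<subseteq> V" using \<open>e \<in> E\<close> Epow by auto
      ultimately have "v \<in> e" using f(2) v(1) by (auto dest: inj_onD)
      then show "e' \<in> image f ` {e\<in>E. v\<in>e}" using \<open>e \<in> E\<close> \<open>e' = f ` e\<close> by auto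
    next
      fix e' assume "e' \<in> image f ` {e\<in>E. v\<in>e}"
      then obtain e where "e \<in> E" "v \<in> e" "e' = f ` e" by blast
      then show "e' \<in> {e'\<in>E'. x \<in> e'}" unfolding E'_def v(2) by blast
    qed
    have "inj_on (image f) {e\<in>E. v\<in>e}" by (rule inj_on_subset[OF injP]) (use Epow in auto)
    then have "card {e'\<in>E'. x \<in> e'} = card {e\<in>E. v\<in>e}" unfolding eq by (rule card_image)
    then show "card {e'\<in>E'. x \<in> e'} = r" using ur v(1) unfolding uregular_def by simp
  qed
  moreover have "girth_ge E' k"
    unfolding girth_ge_def
  proof (intro allI impI)
    fix w n assume cyc: "ucyc E' w n"
    define g where "g = inv_into V f"
    have win: "w t \<in> f ` V" if "t < n" for t
    proof -
      have "{w t, w (Suc t)} \<in> E'" using cyc that unfolding ucyc_def by auto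
      then obtain e where "e \<in> E" "{w t, w (Suc t)} = f ` e" unfolding E'_def by auto
      then show ?thesis using Epow by blast
    qed
    have ginv: "f (g y) = y" if "y \<in> f ` V" for y unfolding g_def using that by (simp add: f_inv_into_f)
    have "ucyc E (g \<circ> w) n"
      unfolding ucyc_def
    proof (intro conjI allI impI)
      show "3 \<le> n" using cyc unfolding ucyc_def by simp
      show "(g \<circ> w) n = (g \<circ> w) 0" using cyc unfolding ucyc_def by simp
      show "inj_on (g \<circ> w) {..<n}"
      proof (rule inj_onI)
        fix a b assume "a \<in> {..<n}" "b \<in> {..<n}" "(g \<circ> w) a = (g \<circ> w) b"
        then have "f (g (w a)) = f (g (w b))" by simp
        then have "w a = w b" using ginv[OF win[of a]] ginv[OF win[of b]] \<open>a \<in> _\<close> \<open>b \<in> _\<close> by simp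
        then show "a = b" using cyc \<open>a \<in> _\<close> \<open>b \<in> _\<close> unfolding ucyc_def by (auto dest: inj_onD)
      qed
      fix t assume "t < n"
      have "{w t, w (Suc t)} \<in> E'" using cyc \<open>t < n\<close> unfolding ucyc_def by auto
      then obtain e where e: "e \<in> E" "{w t, w (Suc t)} = f ` e" unfolding E'_def by auto
      have "e \<subseteq> V" using e(1) Epow by auto
      then have "g ` f ` e = e" unfolding g_def using f(2) by simp
      then show "{(g \<circ> w) t, (g \<circ> w) (Suc t)} \<in> E" using e(2)[symmetric] e(1) by simp
    qed
    then show "k \<le> n" using gg unfolding girth_ge_def by blast
  qed
  moreover have "f ` V \<noteq> {}" using ne by simp
  ultimately show ?thesis by blast
qed

lemma exists_regular_girth:
  "\<exists>(V :: nat set) E. ugraph V E \<and> uregular V E r \<and> girth_ge E k \<and> V \<noteq> {}"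
proof (induction k)
  case 0
  define V where "V = {..r}"
  define E where "E = {{u,v} | u v. u \<le> r \<and> v \<le> r \<and> u \<noteq> v}"
  have "ugraph V E"
    unfolding ugraph_def
  proof (intro conjI ballI)
    show "finite V" unfolding V_def by simp
    fix e assume "e \<in> E"
    then obtain u v where "e = {u,v}" "u \<le> r" "v \<le> r" "u \<noteq> v" unfolding E_def by blast
    then show "\<exists>u v. e = {u, v} \<and> u \<noteq> v \<and> u \<in> V \<and> v \<in> V" unfolding V_def by blast
  qed
  moreover have "uregular V E r"
    unfolding uregular_def
  proof
    fix v assume "v \<in> V"
    have eq: "{e\<in>E. v\<in>e} = (\<lambda>w. {v,w}) ` (V - {v})"
    proof (rule set_eqI, rule iffI)
      fix e assume "e \<in> {e\<in>E. v\<in>e}"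
      then obtain a b where ab: "e = {a,b}" "a \<le> r" "b \<le> r" "a \<noteq> b" "v \<in> e" unfolding E_def by blast
      show "e \<in> (\<lambda>w. {v,w}) ` (V - {v})"
      proof (cases "v = a")
        case True then show ?thesis using ab unfolding V_def by auto
      next
        case False then have "v = b" using ab by auto
        then show ?thesis using ab unfolding V_def by (auto simp: insert_commute)
      qed
    next
      fix e assume "e \<in> (\<lambda>w. {v,w}) ` (V - {v})"
      then obtain w where "w \<in> V" "w \<noteq> v" "e = {v,w}" by auto
      then show "e \<in> {e\<in>E. v\<in>e}" using \<open>v \<in> V\<close> unfolding E_def V_def by blast
    qed
    have "inj_on (\<lambda>w. {v,w}) (V - {v})" by (auto simp: inj_on_def doubleton_eq_iff)
    then show "card {e\<in>E. v\<in>e} = r" unfolding eq using \<open>v \<in> V\<close>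
      by (simp add: card_image V_def)
  qed
  moreover have "girth_ge E 0" unfolding girth_ge_def by simp
  moreover have "V \<noteq> {}" unfolding V_def by auto
  ultimately show ?case by blast
next
  case (Suc k)
  then obtain V :: "nat set" and E where h: "ugraph V E" "uregular V E r" "girth_ge E k" "V \<noteq> {}" by blast
  have "ugraph (V \<times> Pow E) (cover_E E)" "uregular (V \<times> Pow E) (cover_E E) r"
    "girth_ge (cover_E E) (Suc k)" "V \<times> Pow E \<noteq> {}"
    using cover_ugraph[OF h(1)] cover_regular[OF h(1,2)] cover_girth[OF h(1,3)] h(4) by auto
  then show ?case by (rule transfer_nat)
qed



definition enc :: "nat \<Rightarrow> nat \<Rightarrow> nat \<Rightarrow> nat" where
  "enc i a x = prod_encode (i, prod_encode (a, x))"
definition pi :: "nat \<Rightarrow> nat" where "pi v = fst (prod_decode v)"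
definition pa :: "nat \<Rightarrow> nat" where "pa v = fst (prod_decode (snd (prod_decode v)))"
definition px :: "nat \<Rightarrow> nat" where "px v = snd (prod_decode (snd (prod_decode v)))"

lemma enc_eq[simp]: "enc i a x = enc i' a' x' \<longleftrightarrow> i = i' \<and> a = a' \<and> x = x'"
  unfolding enc_def by simp
lemma enc_proj[simp]: "pi (enc i a x) = i" "pa (enc i a x) = a" "px (enc i a x) = x"
  unfolding enc_def pi_def pa_def px_def by (simp_all add: prod_encode_inverse)

lemma mod_suc_neq: assumes "i < g" "2 \<le> (g::nat)" shows "(i + 1) mod g \<noteq> i"
proof (cases "i + 1 < g")
  case False
  then have "i + 1 = g" using \<open>i < g\<close> by simp
  then show ?thesis using \<open>2 \<le> g\<close> by auto
qed auto

lemma pred_mod: assumes "i < g" "i' < (g::nat)"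
  shows "(i' + 1) mod g = i \<longleftrightarrow> i' = (i + g - 1) mod g"
proof -
  have a: "(i' + 1) mod g = (if i' + 1 = g then 0 else i' + 1)" using assms by auto
  have b: "(i + g - 1) mod g = (if i = 0 then g - 1 else i - 1)"
  proof (cases "i = 0")
    case True then show ?thesis using assms by simp
  next
    case False
    then have "(i + g - 1) mod g = ((i - 1) + g) mod g" by simp
    also have "\<dots> = i - 1" using assms by simp
    finally show ?thesis using False by simp
  qed
  show ?thesis unfolding a b using assms by auto
qed

lemma lemma_main:
  fixes z r g :: nat
  assumes z1: "1 \<le> z" and r1: "1 \<le> r" and g3: "3 \<le> g"
  shows "\<exists>(V :: nat set) E A. zrg_mixed_graph z r g V E A"
proof -
  obtain X :: "nat set" and EG where ug: "ugraph X EG" and ur: "uregular X EG r"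
    and gg: "girth_ge EG g" and ne: "X \<noteq> {}"
    using exists_regular_girth by blast
  obtain x0 where x0: "x0 \<in> X" using ne by auto
  have EGd: "\<And>x y. {x,y} \<in> EG \<Longrightarrow> x \<noteq> y \<and> x \<in> X \<and> y \<in> X"
  proof -
    fix x y assume "{x,y} \<in> EG"
    then obtain p q where "{x,y} = {p,q}" "p \<noteq> q" "p \<in> X" "q \<in> X" using ug unfolding ugraph_def by blast
    then show "x \<noteq> y \<and> x \<in> X \<and> y \<in> X" by (auto simp: doubleton_eq_iff)
  qed
  define V where "V = (\<lambda>(i,a,x). enc i a x) ` ({..<g} \<times> {..<z} \<times> X)"
  define E where "E = {{enc i a x, enc i a y} | i a x y. i < g \<and> a < z \<and> {x,y} \<in> EG}"
  define A where "A = {(enc i a x, enc ((i+1) mod g) b x) | i a b x. i < g \<and> a < z \<and> b < z \<and> x \<in> X}"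
  have memV: "v \<in> V \<longleftrightarrow> (\<exists>i a x. v = enc i a x \<and> i < g \<and> a < z \<and> x \<in> X)" for v
  proof
    assume "v \<in> V" then show "\<exists>i a x. v = enc i a x \<and> i < g \<and> a < z \<and> x \<in> X" unfolding V_def by auto
  next
    assume "\<exists>i a x. v = enc i a x \<and> i < g \<and> a < z \<and> x \<in> X"
    then obtain i a x where h: "v = enc i a x" "i < g" "a < z" "x \<in> X" by blast
    show "v \<in> V" unfolding V_def by (rule image_eqI[where x="(i,a,x)"]) (use h in auto)
  qed
  have g2: "2 \<le> g" "0 < g" using g3 by auto
  have mg: "mixed_graph V E A"
    unfolding mixed_graph_def
  proof (intro conjI ballI)
    show "finite V" unfolding V_def using ug unfolding ugraph_def by simp
  next
    fix e assume "e \<in> E"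
    then obtain i a x y where h: "e = {enc i a x, enc i a y}" "i < g" "a < z" "{x,y} \<in> EG"
      unfolding E_def by auto
    then show "\<exists>u v. e = {u, v} \<and> u \<noteq> v \<and> u \<in> V \<and> v \<in> V"
    proof -
      have "enc i a x \<in> V" "enc i a y \<in> V" using EGd[OF h(4)] h(2,3) unfolding memV by blast+
      moreover have "enc i a x \<noteq> enc i a y" using EGd[OF h(4)] by simp
      ultimately show ?thesis using h(1) by blast
    qed
  next
    fix p assume "p \<in> A"
    then obtain i a b x where h: "p = (enc i a x, enc ((i+1) mod g) b x)" "i < g" "a < z" "b < z" "x \<in> X"
      unfolding A_def by auto
    have "(i+1) mod g \<noteq> i" using mod_suc_neq h(2) g2 by blast
    moreover have "(i+1) mod g < g" using g2 by simp
    ultimately have "enc i a x \<in> V" "enc ((i+1) mod g) b x \<in> V" "enc i a x \<noteq> enc ((i+1) mod g) b x"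
      using h unfolding memV by auto
    then show "case p of (u, v) \<Rightarrow> u \<noteq> v \<and> u \<in> V \<and> v \<in> V" using h(1) by simp
  qed
  have deg: "card {w. (v, w) \<in> A} = z \<and> card {w. (w, v) \<in> A} = z \<and> card {e\<in>E. v \<in> e} = r"
    if "v \<in> V" for v
  proof -
    obtain i a x where v: "v = enc i a x" "i < g" "a < z" "x \<in> X" using \<open>v \<in> V\<close> unfolding memV by blast
    have o: "{w. (v, w) \<in> A} = (\<lambda>b. enc ((i+1) mod g) b x) ` {..<z}"
    proof (rule set_eqI, rule iffI)
      fix w assume "w \<in> {w. (v, w) \<in> A}"
      then obtain i' a' b x' where h: "v = enc i' a' x'" "w = enc ((i'+1) mod g) b x'" "b < z"
        unfolding A_def by auto
      then show "w \<in> (\<lambda>b. enc ((i+1) mod g) b x) ` {..<z}" using v by auto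
    next
      fix w assume "w \<in> (\<lambda>b. enc ((i+1) mod g) b x) ` {..<z}"
      then obtain b where "w = enc ((i+1) mod g) b x" "b < z" by auto
      then show "w \<in> {w. (v, w) \<in> A}" unfolding A_def using v by blast
    qed
    have "{w. (w, v) \<in> A} = (\<lambda>b. enc ((i+g-1) mod g) b x) ` {..<z}"
    proof (rule set_eqI, rule iffI)
      fix w assume "w \<in> {w. (w, v) \<in> A}"
      then obtain i' a' b x' where h: "w = enc i' a' x'" "v = enc ((i'+1) mod g) b x'" "i' < g" "a' < z"
        unfolding A_def by blast
      then have "(i'+1) mod g = i" "x' = x" using v by auto
      then have "i' = (i+g-1) mod g" using pred_mod[OF v(2) h(3)] by simp
      then show "w \<in> (\<lambda>b. enc ((i+g-1) mod g) b x) ` {..<z}" using h \<open>x' = x\<close> by auto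
    next
      fix w assume "w \<in> (\<lambda>b. enc ((i+g-1) mod g) b x) ` {..<z}"
      then obtain a' where a': "w = enc ((i+g-1) mod g) a' x" "a' < z" by auto
      have lt: "(i+g-1) mod g < g" using g2 by simp
      have "((i+g-1) mod g + 1) mod g = i" using pred_mod[OF v(2) lt] by simp
      then have "(w, v) = (enc ((i+g-1) mod g) a' x, enc (((i+g-1) mod g + 1) mod g) a x)"
        using a' v by simp
      then show "w \<in> {w. (w, v) \<in> A}" unfolding A_def using lt a' v by blast
    qed
    moreover have "{e\<in>E. v \<in> e} = image (enc i a) ` {e\<in>EG. x \<in> e}"
    proof (rule set_eqI, rule iffI)
      fix e assume "e \<in> {e\<in>E. v \<in> e}"
      then obtain i' a' x' y' where h: "e = {enc i' a' x', enc i' a' y'}" "{x',y'} \<in> EG" "v \<in> e"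
        unfolding E_def by blast
      then have "i' = i" "a' = a" "x \<in> {x',y'}" using v by auto
      then have "e = enc i a ` {x',y'}" "{x',y'} \<in> {e\<in>EG. x \<in> e}" using h by auto
      then show "e \<in> image (enc i a) ` {e\<in>EG. x \<in> e}" by blast
    next
      fix e assume "e \<in> image (enc i a) ` {e\<in>EG. x \<in> e}"
      then obtain e' where e': "e = enc i a ` e'" "e' \<in> EG" "x \<in> e'" by auto
      then obtain p q where "e' = {p,q}" using ug unfolding ugraph_def by blast
      then show "e \<in> {e\<in>E. v \<in> e}" using e' v unfolding E_def by blast
    qed
    moreover have injE: "inj (enc i a)" by (auto simp: inj_def)
    have c1: "card ((\<lambda>b. enc j b x) ` {..<z}) = z" for j by (subst card_image) (auto simp: inj_on_def)
    have "card (image (enc i a) ` {e\<in>EG. x \<in> e}) = card {e\<in>EG. x \<in> e}"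
      by (rule card_image) (auto simp: inj_on_def inj_image_eq_iff[OF injE])
    moreover have "card {e\<in>EG. x \<in> e} = r" using ur v(4) unfolding uregular_def by auto
    ultimately show ?thesis unfolding o using c1 by simp
  qed
  have cyc_ex: "\<exists>vs ls. is_cycle E A vs ls \<and> length ls = g"
  proof -
    define f where "f k = enc (k mod g) 0 x0" for k
    define vs where "vs = map f [0..<Suc g]"
    define ls where "ls = map (\<lambda>k. Arc (f k, f (Suc k))) [0..<g]"
    have bl: "butlast vs = map f [0..<g]" unfolding vs_def by (simp add: map_butlast[symmetric])
    have injf: "inj_on f {0..<g}" unfolding f_def by (auto simp: inj_on_def)
    have "is_cycle E A vs ls"
      unfolding is_cycle_def
    proof (intro conjI allI impI)
      show "1 \<le> length ls" unfolding ls_def using g3 by simp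
      show "length vs = length ls + 1" unfolding ls_def vs_def by simp
      show "hd vs = last vs" unfolding vs_def f_def by (simp del: upt_Suc add: hd_map last_map)
      show "distinct (butlast vs)" unfolding bl using injf by (simp add: distinct_map)
      show "distinct ls" unfolding ls_def using injf by (simp add: distinct_map inj_on_def)
      fix k assume k: "k < length ls"
      then have kg: "k < g" unfolding ls_def by simp
      have "ls ! k = Arc (vs ! k, vs ! Suc k)" unfolding ls_def vs_def using kg
        by (simp del: upt_Suc add: nth_map)
      moreover have "(vs ! k, vs ! Suc k) \<in> A"
      proof -
        have "vs ! k = enc (k mod g) 0 x0" "vs ! Suc k = enc ((k mod g + 1) mod g) 0 x0"
          unfolding vs_def f_def using kg by (simp_all del: upt_Suc add: mod_Suc_eq)
        moreover have "k mod g < g" using g2 by simp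
        moreover have "(0::nat) < z" using z1 by simp
        ultimately show ?thesis unfolding A_def using x0
          by (intro CollectI exI[of _ "k mod g"] exI[of _ 0] exI[of _ x0]) simp
      qed
      ultimately show "link_step E A (ls ! k) (vs ! k) (vs ! Suc k)" unfolding link_step_def by simp
    qed
    moreover have "length ls = g" unfolding ls_def by simp
    ultimately show ?thesis by blast
  qed
  have lower: "g \<le> length ls" if cyc: "is_cycle E A vs ls" for vs ls
  proof -
    define n where "n = length ls"
    have n1: "1 \<le> n" and lvs: "length vs = n + 1" and dvs: "distinct (butlast vs)"
      and dls: "distinct ls" and lk: "\<And>k. k < n \<Longrightarrow> link_step E A (ls ! k) (vs ! k) (vs ! Suc k)"
      using cyc unfolding is_cycle_def n_def by auto
    have vn: "vs ! n = vs ! 0"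
    proof -
      have "vs \<noteq> []" using lvs by auto
      then show ?thesis using cyc lvs unfolding is_cycle_def by (simp add: hd_conv_nth last_conv_nth)
    qed
    define isA where "isA l = (case l of Arc _ \<Rightarrow> True | Edg _ \<Rightarrow> False)" for l :: "nat link"
    have stepE: "ls ! k = Edg {vs ! k, vs ! Suc k} \<and> (\<exists>i a x y. vs ! k = enc i a x \<and> vs ! Suc k = enc i a y \<and> i < g \<and> a < z \<and> {x,y} \<in> EG)"
      if "k < n" "\<not> isA (ls ! k)" for k
    proof -
      have "ls ! k = Edg {vs ! k, vs ! Suc k} \<and> {vs ! k, vs ! Suc k} \<in> E"
        using lk[OF that(1)] that(2) unfolding link_step_def isA_def by auto
      moreover then obtain i a x y where h: "{vs ! k, vs ! Suc k} = {enc i a x, enc i a y}" "i < g" "a < z" "{x,y} \<in> EG"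
        unfolding E_def by auto
      moreover have "{y,x} \<in> EG" using h(4) by (simp add: insert_commute)
      ultimately show ?thesis by (auto simp: doubleton_eq_iff)
    qed
    have stepA: "\<exists>i a b x. vs ! k = enc i a x \<and> vs ! Suc k = enc ((i+1) mod g) b x"
      if "k < n" "isA (ls ! k)" for k
    proof -
      have "(vs ! k, vs ! Suc k) \<in> A"
        using lk[OF that(1)] that(2) unfolding link_step_def isA_def by auto
      then show ?thesis unfolding A_def by auto
    qed
    show ?thesis
    proof (cases "\<exists>k<n. isA (ls ! k)")
      case True
      then obtain k0 where k0: "k0 < n" "isA (ls ! k0)" by blast
      define narc where "narc m = card {s. s < m \<and> isA (ls ! s)}" for m
      define p where "p = pi (vs ! 0)"
      have lev: "pi (vs ! m) mod g = (p + narc m) mod g" if "m \<le> n" for m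
        using that
      proof (induction m)
        case 0 then show ?case unfolding p_def narc_def by simp
      next
        case (Suc m)
        then have mn: "m < n" by simp
        have nc: "narc (Suc m) = narc m + (if isA (ls ! m) then 1 else 0)"
          unfolding narc_def by (rule card_less_Suc_filter)
        show ?case
        proof (cases "isA (ls ! m)")
          case True
          then obtain i a b x where h: "vs ! m = enc i a x" "vs ! Suc m = enc ((i+1) mod g) b x"
            using stepA[OF mn] by blast
          have ih: "i mod g = (p + narc m) mod g" using Suc.IH mn h(1) by simp
          have "pi (vs ! Suc m) mod g = Suc i mod g" using h(2) by simp
          also have "\<dots> = Suc (i mod g) mod g" by (simp add: mod_Suc_eq)
          also have "\<dots> = Suc ((p + narc m) mod g) mod g" using ih by simp
          also have "\<dots> = Suc (p + narc m) mod g" by (simp add: mod_Suc_eq)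
          finally show ?thesis using nc True by simp
        next
          case False
          then obtain i a x y where h: "vs ! m = enc i a x" "vs ! Suc m = enc i a y"
            using stepE[OF mn] by blast
          then show ?thesis using Suc.IH mn nc False by simp
        qed
      qed
      have "(p + narc n) mod g = p mod g" using lev[of n] vn unfolding p_def by simp
      then have dv: "g dvd narc n" using mod_eq_dvd_iff_nat[of p "p + narc n" g] by simp
      have "k0 \<in> {s. s < n \<and> isA (ls ! s)}" using k0 by simp
      then have "narc n \<noteq> 0" unfolding narc_def by (auto simp: card_eq_0_iff)
      then have "g \<le> narc n" using dv by (simp add: dvd_imp_le)
      moreover have "narc n \<le> n" unfolding narc_def
        using card_mono[of "{..<n}" "{s. s < n \<and> isA (ls ! s)}"] by auto
      ultimately show ?thesis unfolding n_def by simp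
    next
      case False
      then have nA: "\<And>k. k < n \<Longrightarrow> \<not> isA (ls ! k)" by blast
      have same: "pi (vs ! m) = pi (vs ! 0) \<and> pa (vs ! m) = pa (vs ! 0)" if "m \<le> n" for m
        using that
      proof (induction m)
        case 0 then show ?case by simp
      next
        case (Suc m)
        then have mn: "m < n" by simp
        obtain i a x y where h: "vs ! m = enc i a x" "vs ! Suc m = enc i a y"
          using stepE[OF mn nA[OF mn]] by blast
        then show ?case using Suc.IH mn by simp
      qed
      have repr: "vs ! k = enc (pi (vs ! 0)) (pa (vs ! 0)) (px (vs ! k))" if kn: "k < n" for k
      proof -
        obtain i a x y where h: "vs ! k = enc i a x" using stepE[OF kn nA[OF kn]] by blast
        then show ?thesis using same[of k] kn by simp
      qed
      define xw where "xw m = px (vs ! m)" for m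
      have edg: "{xw k, xw (Suc k)} \<in> EG \<and> xw k \<noteq> xw (Suc k)" if kn: "k < n" for k
      proof -
        obtain i a x y where h: "vs ! k = enc i a x" "vs ! Suc k = enc i a y" "{x,y} \<in> EG"
          using stepE[OF kn nA[OF kn]] by blast
        then show ?thesis unfolding xw_def using EGd[OF h(3)] by simp
      qed
      have "n \<noteq> 1"
      proof
        assume "n = 1"
        then show False using edg[of 0] vn unfolding xw_def by simp
      qed
      moreover have "n \<noteq> 2"
      proof
        assume n2: "n = 2"
        have "ls ! 0 = Edg {vs ! 0, vs ! 1}" "ls ! 1 = Edg {vs ! 1, vs ! 2}"
          using stepE[of 0] stepE[of 1] nA n2 by (simp_all add: numeral_2_eq_2)
        then have "ls ! 0 = ls ! 1" using vn n2 by (simp add: insert_commute)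
        then show False using dls n2 unfolding n_def by (simp add: nth_eq_iff_index_eq)
      qed
      ultimately have n3: "3 \<le> n" using n1 by linarith
      have "ucyc EG xw n"
        unfolding ucyc_def
      proof (intro conjI allI impI)
        show "3 \<le> n" by (rule n3)
        show "xw n = xw 0" unfolding xw_def using vn by simp
        show "inj_on xw {..<n}"
        proof (rule inj_onI)
          fix a b assume ab: "a \<in> {..<n}" "b \<in> {..<n}" "xw a = xw b"
          then have "vs ! a = vs ! b" using repr[of a] repr[of b] unfolding xw_def by simp
          moreover have "butlast vs ! a = vs ! a" "butlast vs ! b = vs ! b"
            using ab lvs by (simp_all add: nth_butlast)
          ultimately have "butlast vs ! a = butlast vs ! b" by simp
          then show "a = b" using dvs ab lvs by (simp add: nth_eq_iff_index_eq)
        qed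
        fix k assume "k < n" then show "{xw k, xw (Suc k)} \<in> EG" using edg by blast
      qed
      then show ?thesis using gg unfolding girth_ge_def n_def by blast
    qed
  qed
  show ?thesis
    unfolding zrg_mixed_graph_def has_girth_def
    using mg deg cyc_ex lower by blast
qed


theorem theorem1:
  fixes z r g :: nat
  assumes "1 \<le> z" and "1 \<le> r" and "3 \<le> g"
  shows "\<exists>(V :: nat set) E A. zrg_mixed_graph z r g V E A"
  using lemma_main[OF assms] .

end
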